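(* Let $\{\gamma_n\}_{n\ge1}$ be a deterministic positive sequence with $\sum_k\gamma_k=\infty$, $\sum_k\gamma_k^2<\infty$ and $\log(\gamma_{k-1}/\gamma_k)=o(\gamma_k)$, and let $A$ be a deterministic $d\times d$ Hurwitz matrix. Let $\{x_n\}_{n\ge0}$ be $\mathbb R^d$-valued random variables satisfying $$x_{n+1}=x_n+\gamma_{n+1}Ax_n+\gamma_{n+1}\zeta_{n+1}^{(1)}+\gamma_{n+1}\zeta_{n+1}^{(2)},\qquad n\ge0,$$ where $$\sum_{k=1}^n\gamma_k\Big(\prod_{j=k+1}^{n+1}(\mathrm{Id}+\gamma_jA)\Big)\zeta_k^{(1)}\mathbf 1_{\lim_qx_q=0}=\sqrt{\gamma_n}\,O_{w.p.1}(1)O_{L^2}(1),\qquad |\zeta_n^{(2)}|\mathbf 1_{\lim_qx_q=0}=|x_n|^2\,O_{w.p.1}(1).$$ Then $\gamma_n^{-1}|x_n|^2\mathbf 1_{\lim_qx_q=0}=O_{w.p.1}(1)O_{L^1}(1)$.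
   Context: $|\cdot|$ Euclidean norm; $\mathrm{Id}$ identity; a Hurwitz matrix has all eigenvalues with negative real part. $Z_n=O_{w.p.1}(1)$ means $\sup_n|Z_n|<\infty$ a.s.; $O_{L^p}(1)$ means $\sup_n\mathbb E|Z_n|^p<\infty$; a product $O_{w.p.1}(1)O_{L^p}(1)$ denotes $W_n\bar W_n$ with $W_n=O_{w.p.1}(1)$, $\bar W_n=O_{L^p}(1)$. *)

theory Defs
  imports "HOL-Probability.Probability" "HOL-Library.Landau_Symbols"
begin

definition hurwitz :: "real^'d^'d \<Rightarrow> bool" where
  "hurwitz A \<longleftrightarrow>
     (\<forall>z::complex. det (mat z - (\<chi> i j. complex_of_real (A $ i $ j))) = 0 \<longrightarrow> Re z < 0)"

definition mat_prod_range :: "(nat \<Rightarrow> real^'d^'d) \<Rightarrow> nat \<Rightarrow> nat \<Rightarrow> real^'d^'d" where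
  "mat_prod_range f m n = foldr (\<lambda>j P. f j ** P) [m..<Suc n] (mat 1)"

definition O_wp1 :: "'a measure \<Rightarrow> (nat \<Rightarrow> 'a \<Rightarrow> real) \<Rightarrow> bool" where
  "O_wp1 M W \<longleftrightarrow> (\<forall>n. W n \<in> borel_measurable M) \<and>
     (AE \<omega> in M. \<exists>B. \<forall>n. \<bar>W n \<omega>\<bar> \<le> B)"

definition O_Lp :: "'a measure \<Rightarrow> real \<Rightarrow> (nat \<Rightarrow> 'a \<Rightarrow> 'b::euclidean_space) \<Rightarrow> bool" where
  "O_Lp M p W \<longleftrightarrow> (\<forall>n. W n \<in> borel_measurable M) \<and>
     (\<exists>C::real. \<forall>n. (\<integral>\<^sup>+ \<omega>. ennreal (norm (W n \<omega>) powr p) \<partial>M) \<le> ennreal C)"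

end

theory Submission
  imports Defs "Jordan_Normal_Form.Spectral_Radius"
begin

hide_const (open) Matrix.vec Matrix.mat Matrix.row Matrix.col Determinant.det

definition toM :: "(nat \<Rightarrow> 'd::finite) \<Rightarrow> nat \<Rightarrow> 'a::comm_ring_1^'d^'d \<Rightarrow> 'a Matrix.mat" where
  "toM h n C = Matrix.mat n n (\<lambda>(i,j). C $ h i $ h j)"

definition toV :: "(nat \<Rightarrow> 'd::finite) \<Rightarrow> nat \<Rightarrow> 'a::comm_ring_1^'d \<Rightarrow> 'a Matrix.vec" where
  "toV h n w = Matrix.vec n (\<lambda>i. w $ h i)"

definition fromV :: "(nat \<Rightarrow> 'd::finite) \<Rightarrow> nat \<Rightarrow> 'a::comm_ring_1 Matrix.vec \<Rightarrow> 'a^'d" where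
  "fromV h n v = (\<chi> j. v $ (the_inv_into {..<n} h j))"

lemma toM_mult:
  assumes h: "bij_betw h {..<n} (UNIV::'d::finite set)"
  shows "toM h n ((C::'a::comm_ring_1^'d^'d) ** D) = toM h n C * toM h n D"
proof (rule eq_matI)
  fix i j assume "i < dim_row (toM h n C * toM h n D)" "j < dim_col (toM h n C * toM h n D)"
  hence ij: "i < n" "j < n" by (auto simp: toM_def)
  have "(toM h n C * toM h n D) $$ (i,j) = (\<Sum>l\<in>{..<n}. C $ h i $ h l * D $ h l $ h j)"
    using ij by (simp add: toM_def scalar_prod_def atLeast0LessThan)
  also have "\<dots> = (\<Sum>l\<in>UNIV. C $ h i $ l * D $ l $ h j)"
    using sum.reindex_bij_betw[OF h, of "\<lambda>l. C $ h i $ l * D $ l $ h j"] by simp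
  also have "\<dots> = (C ** D) $ h i $ h j" by (simp add: matrix_matrix_mult_def)
  finally show "toM h n (C ** D) $$ (i, j) = (toM h n C * toM h n D) $$ (i, j)"
    using ij by (simp add: toM_def)
qed (auto simp: toM_def)

lemma toM_one:
  assumes h: "bij_betw h {..<n} (UNIV::'d::finite set)"
  shows "toM h n (mat 1 :: 'a::comm_ring_1^'d^'d) = 1\<^sub>m n"
proof (rule eq_matI)
  fix i j assume "i < dim_row (1\<^sub>m n :: 'a Matrix.mat)" "j < dim_col (1\<^sub>m n :: 'a Matrix.mat)"
  hence ij: "i < n" "j < n" by auto
  have "h i = h j \<longleftrightarrow> i = j" using h ij unfolding bij_betw_def inj_on_def by auto
  thus "toM h n (mat 1 :: 'a::comm_ring_1^'d^'d) $$ (i, j) = 1\<^sub>m n $$ (i, j)"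
    using ij by (simp add: toM_def Finite_Cartesian_Product.mat_def)
qed (auto simp: toM_def)

lemma toV_mult:
  assumes h: "bij_betw h {..<n} (UNIV::'d::finite set)"
  shows "toM h n (C::'a::comm_ring_1^'d^'d) *\<^sub>v toV h n w = toV h n (C *v w)"
proof (rule eq_vecI)
  fix i assume "i < dim_vec (toV h n (C *v w))"
  hence i: "i < n" by (simp add: toV_def)
  have "(toM h n C *\<^sub>v toV h n w) $ i = (\<Sum>l\<in>{..<n}. C $ h i $ h l * w $ h l)"
    using i by (simp add: toM_def toV_def scalar_prod_def atLeast0LessThan)
  also have "\<dots> = (\<Sum>l\<in>UNIV. C $ h i $ l * w $ l)"
    using sum.reindex_bij_betw[OF h, of "\<lambda>l. C $ h i $ l * w $ l"] by simp
  also have "\<dots> = toV h n (C *v w) $ i" using i by (simp add: toV_def matrix_vector_mult_def)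
  finally show "(toM h n C *\<^sub>v toV h n w) $ i = toV h n (C *v w) $ i" .
qed (auto simp: toM_def toV_def)

lemma toV_fromV:
  assumes h: "bij_betw h {..<n} (UNIV::'d::finite set)" and v: "dim_vec v = n"
  shows "toV h n (fromV h n v :: 'a::comm_ring_1^'d) = v"
proof (rule eq_vecI)
  fix i assume "i < dim_vec v"
  hence i: "i < n" using v by simp
  have "the_inv_into {..<n} h (h i) = i"
    using h i by (intro the_inv_into_f_f) (auto simp: bij_betw_def)
  thus "toV h n (fromV h n v) $ i = v $ i" using i by (simp add: toV_def fromV_def)
qed (auto simp: toV_def v)

lemma toV_inj:
  assumes h: "bij_betw h {..<n} (UNIV::'d::finite set)"
    and eq: "toV h n (w::'a::comm_ring_1^'d) = toV h n w'"
  shows "w = w'"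
proof -
  { fix j :: 'd
  obtain i where i: "i < n" "j = h i" using h unfolding bij_betw_def by force
  have "toV h n w $ i = toV h n w' $ i" using eq by simp
  hence "w $ j = w' $ j" using i by (simp add: toV_def) }
  thus ?thesis by (simp add: Finite_Cartesian_Product.vec_eq_iff)
qed

lemma toV_smult: "toV h n (c *s w) = c \<cdot>\<^sub>v toV h n w"
  by (rule eq_vecI) (auto simp: toV_def)

lemma toV_zero: "toV h n (0::'a::comm_ring_1^'d::finite) = 0\<^sub>v n"
  by (rule eq_vecI) (auto simp: toV_def)

lemma eig_to_analysis:
  assumes h: "bij_betw h {..<n} (UNIV::'d::finite set)"
    and ev: "eigenvalue (toM h n (C::'a::comm_ring_1^'d^'d)) \<mu>"
  shows "\<exists>w::'a^'d. w \<noteq> 0 \<and> C *v w = \<mu> *s w"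
proof -
  obtain v where v: "v \<in> carrier_vec n" "v \<noteq> 0\<^sub>v n" "toM h n C *\<^sub>v v = \<mu> \<cdot>\<^sub>v v"
    using ev unfolding eigenvalue_def eigenvector_def by (auto simp: toM_def)
  define w where "w = (fromV h n v :: 'a^'d)"
  have tw: "toV h n w = v" using toV_fromV[OF h] carrier_vecD[OF v(1)] by (simp add: w_def)
  have "toV h n (C *v w) = toV h n (\<mu> *s w)"
    using toV_mult[OF h, of C w] v(3) tw toV_smult by metis
  hence "C *v w = \<mu> *s w" by (rule toV_inj[OF h])
  moreover have "w \<noteq> 0" using tw v(2) toV_zero by metis
  ultimately show ?thesis by blast
qed

lemma eig_from_analysis:
  assumes h: "bij_betw h {..<n} (UNIV::'d::finite set)"
    and w: "w \<noteq> 0" "(C::'a::comm_ring_1^'d^'d) *v w = \<mu> *s w"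
  shows "eigenvalue (toM h n C) \<mu>"
  unfolding eigenvalue_def eigenvector_def
proof (intro exI[of _ "toV h n w"] conjI)
  show "toV h n w \<in> carrier_vec (dim_row (toM h n C))" by (simp add: toV_def toM_def)
  show "toV h n w \<noteq> 0\<^sub>v (dim_row (toM h n C))"
    using toV_inj[OF h, of w 0] w(1) toV_zero by (metis dim_row_mat(1) toM_def)
  show "toM h n C *\<^sub>v toV h n w = \<mu> \<cdot>\<^sub>v toV h n w"
    using toV_mult[OF h] w(2) toV_smult by metis
qed


lemma hurwitz_eig:
  fixes A :: "real^'d^'d"
  assumes hw: "hurwitz A" and w: "w \<noteq> 0"
    and ev: "(\<chi> i j. complex_of_real (A $ i $ j)) *v w = \<mu> *s w"
  shows "Re \<mu> < 0"
proof (rule ccontr)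
  define C :: "complex^'d^'d" where "C = (\<chi> i j. complex_of_real (A $ i $ j))"
  define M where "M = mat \<mu> - C"
  assume "\<not> Re \<mu> < 0"
  hence "det M \<noteq> 0" using hw unfolding hurwitz_def M_def C_def by auto
  hence "invertible M" using invertible_det_nz by blast
  then obtain B where B: "B ** M = mat 1" using invertible_left_inverse by blast
  have mv: "mat \<mu> *v w = \<mu> *s w"
    by (simp add: Finite_Cartesian_Product.vec_eq_iff matrix_vector_mult_def
        Finite_Cartesian_Product.mat_def if_distrib[of "\<lambda>x. x * _"] sum.delta cong: if_cong)
  have "M *v w = 0"
    using ev mv unfolding M_def C_def by (simp add: matrix_vector_mult_diff_rdistrib)
  hence "w = 0" by (metis B matrix_vector_mul_assoc matrix_vector_mul_lid matrix_vector_mult_0_right)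
  thus False using w by simp
qed

lemma finite_pos_min:
  fixes f :: "'b \<Rightarrow> real"
  assumes "finite S" "\<forall>x\<in>S. 0 < f x"
  shows "\<exists>m>0. \<forall>x\<in>S. m \<le> f x"
  using assms
proof (induction S rule: finite_induct)
  case empty then show ?case by (auto intro: exI[of _ 1])
next
  case (insert x F)
  then obtain m where m: "m > 0" "\<forall>y\<in>F. m \<le> f y" by auto
  show ?case using m insert by (intro exI[of _ "min m (f x)"]) auto
qed

definition rpow :: "'a::semiring_1^'d^'d \<Rightarrow> nat \<Rightarrow> 'a^'d^'d" where
  "rpow B k = ((\<lambda>P. P ** B) ^^ k) (mat 1)"

lemma rpow_0[simp]: "rpow B 0 = mat 1" by (simp add: rpow_def)
lemma rpow_Suc: "rpow B (Suc k) = rpow B k ** B" by (simp add: rpow_def)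

lemma rpow_of_real:
  fixes B :: "real^'d^'d"
  shows "rpow (\<chi> i j. complex_of_real (B $ i $ j)) k = (\<chi> i j. complex_of_real (rpow B k $ i $ j))"
proof (induction k)
  case 0 show ?case by (simp add: Finite_Cartesian_Product.vec_eq_iff Finite_Cartesian_Product.mat_def)
next
  case (Suc k) show ?case
    by (simp add: rpow_Suc Suc Finite_Cartesian_Product.vec_eq_iff matrix_matrix_mult_def)
qed

lemma toM_rpow:
  assumes h: "bij_betw h {..<n} (UNIV::'d::finite set)"
  shows "toM h n (rpow (C::'a::comm_ring_1^'d^'d) k) = toM h n C ^\<^sub>m k"
proof (induction k)
  case 0 show ?case using toM_one[OF h] by (simp add: toM_def)
next
  case (Suc k) show ?case by (simp add: rpow_Suc toM_mult[OF h] Suc)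
qed

lemma mv_scaleR: "(P::real^'d^'d) *v (s *\<^sub>R v) = s *\<^sub>R (P *v v)"
  by (simp add: Finite_Cartesian_Product.vec_eq_iff matrix_vector_mult_def sum_distrib_left algebra_simps)

lemma hurwitz_contraction:
  fixes A :: "real^'d^'d"
  assumes hw: "hurwitz A"
  shows "\<exists>nrm c hh K. c > 0 \<and> hh > 0 \<and> (\<forall>v. norm v \<le> nrm v) \<and> (\<forall>v. nrm v \<le> K * norm v)
    \<and> (\<forall>u v. nrm (u + v) \<le> nrm u + nrm v)
    \<and> (\<forall>t v. 0 \<le> t \<longrightarrow> t \<le> hh \<longrightarrow> nrm (v + t *\<^sub>R (A *v v)) \<le> (1 - c * t) * nrm v)"
proof -
  define n where "n = CARD('d)"
  obtain h where h: "bij_betw h {..<n} (UNIV::'d set)"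
    using ex_bij_betw_nat_finite[of "UNIV::'d set"] by (auto simp: n_def atLeast0LessThan)
  have n0: "n > 0" by (simp add: n_def)
  define CA :: "complex^'d^'d" where "CA = (\<chi> i j. complex_of_real (A $ i $ j))"
  define S where "S = {z. \<exists>w. w \<noteq> 0 \<and> CA *v w = z *s w}"
  have "S \<subseteq> spectrum (toM h n CA)"
    unfolding S_def spectrum_def using eig_from_analysis[OF h] by auto
  hence finS: "finite S"
    using card_finite_spectrum(1)[of "toM h n CA" n] by (auto simp: toM_def intro: finite_subset)
  have reS: "\<forall>z\<in>S. Re z < 0" using hurwitz_eig[OF hw] unfolding S_def CA_def by blast
  have "\<forall>z\<in>S. 0 < - Re z / (cmod z)^2"
  proof
    fix z assume "z \<in> S"
    hence "Re z < 0" using reS by auto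
    moreover hence "z \<noteq> 0" by auto
    ultimately show "0 < - Re z / (cmod z)^2" by (intro divide_pos_pos) auto
  qed
  from finite_pos_min[OF finS this] obtain m1 where m1: "m1 > 0" "\<forall>z\<in>S. m1 \<le> - Re z / (cmod z)^2"
    by blast
  have "\<forall>z\<in>S. 0 < - Re z" using reS by auto
  from finite_pos_min[OF finS this] obtain g where g: "g > 0" "\<forall>z\<in>S. g \<le> - Re z"
    by blast
  define hh where "hh = min m1 (1/g)"
  have hh: "hh > 0" "hh * g \<le> 1" using m1 g by (auto simp: hh_def min_def field_simps)
  have bnd: "(cmod (1 + of_real hh * z))^2 \<le> 1 - hh * g" if "z \<in> S" for z
  proof -
    have r: "Re z < 0" using reS that by auto
    hence l0: "(cmod z)^2 > 0" by auto
    have "hh \<le> - Re z / (cmod z)^2" using m1 that by (auto simp: hh_def)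
    hence "hh * (cmod z)^2 \<le> - Re z" using l0 by (simp add: field_simps)
    hence a: "hh * (hh * (cmod z)^2) \<le> hh * (- Re z)" using hh(1) by (intro mult_left_mono) auto
    have "(cmod (1 + of_real hh * z))^2 = (1 + hh * Re z)^2 + (hh * Im z)^2"
      by (simp add: cmod_def)
    also have "\<dots> = 1 + 2 * hh * Re z + hh * (hh * (cmod z)^2)"
      by (simp only: cmod_power2) (simp add: power2_eq_square algebra_simps)
    also have "\<dots> \<le> 1 + hh * Re z" using a by simp
    also have "\<dots> \<le> 1 - hh * g"
    proof -
      have "g \<le> - Re z" using g(2) that by auto
      hence "hh * g \<le> hh * (- Re z)" using hh(1) by (intro mult_left_mono) auto
      thus ?thesis by simp
    qed
    finally show ?thesis .
  qed
  define \<rho> where "\<rho> = sqrt (1 - hh * g / 2)"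
  have \<rho>: "0 < \<rho>" "\<rho> < 1" using hh g by (auto simp: \<rho>_def)
  have lt\<rho>: "cmod (1 + of_real hh * z) < \<rho>" if "z \<in> S" for z
  proof -
    have p: "0 < hh * g" using hh(1) g(1) by simp
    have "\<rho>^2 = 1 - hh * g / 2" using hh(2) unfolding \<rho>_def by (simp add: real_sqrt_pow2)
    hence "(cmod (1 + of_real hh * z))^2 < \<rho>^2" using bnd[OF that] p by linarith
    thus ?thesis using \<rho> by (simp add: power_less_imp_less_base)
  qed
  define RB :: "real^'d^'d" where "RB = (\<chi> i j. (1/\<rho>) * ((if i = j then 1 else 0) + hh * A $ i $ j))"
  define CB :: "complex^'d^'d" where "CB = (\<chi> i j. complex_of_real (RB $ i $ j))"
  have CBv: "CB *v w = of_real (1/\<rho>) *s (w + of_real hh *s (CA *v w))" for w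
  proof -
    have "(CB *v w) $ i = (of_real (1/\<rho>) *s (w + of_real hh *s (CA *v w))) $ i" for i
    proof -
      have "(CB *v w) $ i = (\<Sum>j\<in>UNIV. complex_of_real (RB $ i $ j) * w $ j)"
        by (simp add: matrix_vector_mult_def CB_def)
      also have "\<dots> = (\<Sum>j\<in>UNIV. of_real (1/\<rho>) * ((if i = j then w $ j else 0)
             + of_real hh * (of_real (A $ i $ j) * w $ j)))"
        by (rule sum.cong[OF refl], rename_tac j, case_tac "i = j", simp_all add: RB_def algebra_simps)
      also have "\<dots> = of_real (1/\<rho>) * (w $ i + of_real hh * (\<Sum>j\<in>UNIV. of_real (A $ i $ j) * w $ j))"
        by (simp add: sum_divide_distrib[symmetric] sum.distrib sum_distrib_left[symmetric] sum.delta sum.delta')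
      finally show ?thesis by (simp add: CA_def matrix_vector_mult_def add_divide_distrib)
    qed
    thus ?thesis by (simp add: Finite_Cartesian_Product.vec_eq_iff)
  qed
  have eigCB: "cmod \<mu> < 1" if ev: "eigenvalue (toM h n CB) \<mu>" for \<mu>
  proof -
    obtain w where w: "w \<noteq> 0" "CB *v w = \<mu> *s w" using eig_to_analysis[OF h ev] by blast
    have "of_real (1/\<rho>) *s (w + of_real hh *s (CA *v w)) = \<mu> *s w" using w CBv by simp
    hence "w + of_real hh *s (CA *v w) = (of_real \<rho> * \<mu>) *s w"
      using \<rho> by (simp add: Finite_Cartesian_Product.vec_eq_iff field_simps)
    hence "CA *v w = ((of_real \<rho> * \<mu> - 1) / of_real hh) *s w"
      using hh by (simp add: Finite_Cartesian_Product.vec_eq_iff field_simps)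
    hence inS: "(of_real \<rho> * \<mu> - 1) / of_real hh \<in> S" using w unfolding S_def by blast
    have "1 + of_real hh * ((of_real \<rho> * \<mu> - 1) / of_real hh) = of_real \<rho> * \<mu>"
      using hh by (simp add: field_simps)
    hence "cmod (of_real \<rho> * \<mu>) < \<rho>" using lt\<rho>[OF inS] by simp
    hence "\<rho> * cmod \<mu> < \<rho> * 1" using \<rho> by (simp add: norm_mult)
    thus ?thesis using \<rho> by simp
  qed
  have Mc: "toM h n CB \<in> carrier_mat n n" by (simp add: toM_def)
  have "spectral_radius (toM h n CB) < 1"
  proof -
    have fin: "finite (spectrum (toM h n CB))" using card_finite_spectrum(1)[OF Mc] .
    have ne: "spectrum (toM h n CB) \<noteq> {}" using spectrum_non_empty[OF Mc n0] .
    show ?thesis unfolding spectral_radius_def using fin ne eigCB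
      by (subst Max_less_iff) (auto simp: spectrum_def)
  qed
  then obtain c0 where c0: "\<forall>k. norm_bound (toM h n CB ^\<^sub>m k) c0"
    using spectral_radius_jnf_norm_bound_less_1_upper_triangular[OF Mc] by blast
  have entry: "\<bar>rpow RB k $ i $ j\<bar> \<le> c0" for k i j
  proof -
    obtain i' where i': "i' < n" "i = h i'" using h unfolding bij_betw_def by force
    obtain j' where j': "j' < n" "j = h j'" using h unfolding bij_betw_def by force
    have "norm ((toM h n CB ^\<^sub>m k) $$ (i', j')) \<le> c0"
      using c0 i' j' unfolding norm_bound_def by (auto simp: toM_def)
    moreover have "(toM h n CB ^\<^sub>m k) $$ (i', j') = complex_of_real (rpow RB k $ i $ j)"
      using toM_rpow[OF h, of CB k, symmetric] i' j' unfolding CB_def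
      by (simp add: rpow_of_real toM_def)
    ultimately show ?thesis by simp
  qed
  define K where "K = real n * real n * c0"
  have opb: "norm (rpow RB k *v x) \<le> K * norm x" for k x
  proof -
    have ci: "\<bar>(rpow RB k *v x) $ i\<bar> \<le> real n * c0 * norm x" for i
    proof -
      have "\<bar>(rpow RB k *v x) $ i\<bar> = \<bar>\<Sum>j\<in>UNIV. rpow RB k $ i $ j * x $ j\<bar>"
        by (simp add: matrix_vector_mult_def)
      also have "\<dots> \<le> (\<Sum>j\<in>UNIV. \<bar>rpow RB k $ i $ j * x $ j\<bar>)" by (rule sum_abs)
      also have "\<dots> \<le> (\<Sum>j\<in>(UNIV::'d set). c0 * norm x)"
        by (intro sum_mono, simp only: abs_mult, rule mult_mono[OF entry component_le_norm_cart order_trans[OF abs_ge_zero entry] abs_ge_zero])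
      also have "\<dots> = real n * c0 * norm x" by (simp add: n_def)
      finally show ?thesis .
    qed
    have "norm (rpow RB k *v x) \<le> (\<Sum>i\<in>UNIV. \<bar>(rpow RB k *v x) $ i\<bar>)" by (rule norm_le_l1_cart)
    also have "\<dots> \<le> (\<Sum>i\<in>(UNIV::'d set). real n * c0 * norm x)" by (intro sum_mono ci)
    also have "\<dots> = K * norm x" by (simp add: n_def K_def)
    finally show ?thesis .
  qed
  define nrm where "nrm v = (SUP k. norm (rpow RB k *v v))" for v
  have bdd: "bdd_above (range (\<lambda>k. norm (rpow RB k *v v)))" for v
    using opb by (intro bdd_aboveI2) auto
  have up: "norm (rpow RB k *v v) \<le> nrm v" for k v
    unfolding nrm_def by (rule cSUP_upper[OF _ bdd]) auto
  have lub: "nrm v \<le> B" if "\<And>k. norm (rpow RB k *v v) \<le> B" for v B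
    unfolding nrm_def by (rule cSUP_least) (auto intro: that)
  have P1: "norm v \<le> nrm v" for v using up[of 0 v] by simp
  have P2: "nrm v \<le> K * norm v" for v using lub opb by blast
  have P3: "nrm (u + v) \<le> nrm u + nrm v" for u v
    by (rule lub) (metis matrix_vector_right_distrib norm_triangle_le add_mono up)
  have P4: "nrm (s *\<^sub>R v) \<le> \<bar>s\<bar> * nrm v" for s v
    by (rule lub) (simp add: mv_scaleR mult_left_mono up)
  have P5: "nrm (RB *v v) \<le> nrm v" for v
    by (rule lub) (metis matrix_vector_mul_assoc rpow_Suc up)
  have RBv: "v + hh *\<^sub>R (A *v v) = \<rho> *\<^sub>R (RB *v v)" for v
  proof -
    have "(RB *v v) $ i = (1/\<rho>) * (v $ i + hh * (A *v v) $ i)" for i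
    proof -
      have "(RB *v v) $ i = (\<Sum>j\<in>UNIV. RB $ i $ j * v $ j)"
        by (simp add: matrix_vector_mult_def)
      also have "\<dots> = (\<Sum>j\<in>UNIV. (1/\<rho>) * ((if i = j then v $ j else 0) + hh * (A $ i $ j * v $ j)))"
        by (rule sum.cong[OF refl], rename_tac j, case_tac "i = j", simp_all add: RB_def algebra_simps)
      also have "\<dots> = (1/\<rho>) * (v $ i + hh * (\<Sum>j\<in>UNIV. A $ i $ j * v $ j))"
        by (simp add: sum_divide_distrib[symmetric] sum.distrib sum_distrib_left[symmetric] sum.delta sum.delta' add_divide_distrib)
      finally show ?thesis by (simp add: matrix_vector_mult_def)
    qed
    thus ?thesis using \<rho> by (simp add: Finite_Cartesian_Product.vec_eq_iff field_simps)
  qed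
  define c where "c = (1 - \<rho>) / hh"
  have main: "nrm (v + t *\<^sub>R (A *v v)) \<le> (1 - c * t) * nrm v" if t: "0 \<le> t" "t \<le> hh" for t v
  proof -
    have nn: "0 \<le> nrm v" using P1[of v] norm_ge_zero[of v] by linarith
    have "v + t *\<^sub>R (A *v v) = (1 - t/hh) *\<^sub>R v + (t/hh) *\<^sub>R (v + hh *\<^sub>R (A *v v))"
      using hh by (simp add: algebra_simps)
    also have "\<dots> = (1 - t/hh) *\<^sub>R v + (t/hh * \<rho>) *\<^sub>R (RB *v v)" by (simp add: RBv)
    finally have eq: "v + t *\<^sub>R (A *v v) = (1 - t/hh) *\<^sub>R v + (t/hh * \<rho>) *\<^sub>R (RB *v v)" .
    have c1: "0 \<le> 1 - t/hh" "0 \<le> t/hh * \<rho>" using t hh \<rho> by (auto simp: field_simps)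
    have "nrm (v + t *\<^sub>R (A *v v)) \<le> nrm ((1 - t/hh) *\<^sub>R v) + nrm ((t/hh * \<rho>) *\<^sub>R (RB *v v))"
      unfolding eq by (rule P3)
    also have "\<dots> \<le> (1 - t/hh) * nrm v + (t/hh * \<rho>) * nrm (RB *v v)"
    proof -
      have a1: "nrm ((1 - t/hh) *\<^sub>R v) \<le> (1 - t/hh) * nrm v"
        using P4[of "1 - t/hh" v] c1(1) by (simp only: abs_of_nonneg)
      have a2: "nrm ((t/hh * \<rho>) *\<^sub>R (RB *v v)) \<le> (t/hh * \<rho>) * nrm (RB *v v)"
        using P4[of "t/hh * \<rho>" "RB *v v"] c1(2) by (simp only: abs_of_nonneg)
      show ?thesis using a1 a2 by linarith
    qed
    also have "\<dots> \<le> (1 - t/hh) * nrm v + (t/hh * \<rho>) * nrm v"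
      using mult_left_mono[OF P5[of v] c1(2)] by simp
    also have "\<dots> = (1 - c * t) * nrm v" using hh by (simp add: c_def field_simps)
    finally show ?thesis .
  qed
  have "c > 0" using \<rho> hh by (simp add: c_def)
  thus ?thesis using hh P1 P2 P3 main by blast
qed



lemma sq_step:
  fixes \<alpha> e \<beta> e' :: real
  assumes a: "0 < \<alpha>" "\<alpha> \<le> 1" and e': "0 \<le> e'" "e' \<le> (1 - \<alpha>) * e + \<beta>" and e: "0 \<le> e" "0 \<le> \<beta>"
  shows "e'^2 \<le> (1 - \<alpha>) * e^2 + (1 + 1/\<alpha>) * \<beta>^2"
proof -
  have "e'^2 \<le> ((1-\<alpha>)*e + \<beta>)^2" using e' by (intro power_mono) auto
  moreover have "\<alpha> * ((1-\<alpha>)*e + \<beta>)^2 \<le> \<alpha> * ((1 - \<alpha>) * e^2 + (1 + 1/\<alpha>) * \<beta>^2)"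
  proof -
    have h: "\<alpha> * (1 + 1/\<alpha>) = \<alpha> + 1" using a by (simp add: distrib_left)
    have gen: "\<And>z. \<alpha> * ((1 - \<alpha>) * e^2 + z * \<beta>^2) = \<alpha> * (1 - \<alpha>) * e^2 + (\<alpha> * z) * \<beta>^2"
      by (simp add: algebra_simps)
    have "\<alpha> * ((1 - \<alpha>) * e^2 + (1 + 1/\<alpha>) * \<beta>^2) = \<alpha> * (1 - \<alpha>) * e^2 + (\<alpha> + 1) * \<beta>^2"
      using gen[of "1 + 1/\<alpha>"] h by metis
    moreover have "\<alpha> * (1 - \<alpha>) * e^2 + (\<alpha> + 1) * \<beta>^2 - \<alpha> * ((1-\<alpha>)*e + \<beta>)^2
        = (1-\<alpha>)*(\<alpha>*e-\<beta>)^2 + \<alpha>*\<beta>^2"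
      by (simp add: power2_eq_square algebra_simps)
    moreover have "0 \<le> (1-\<alpha>)*(\<alpha>*e-\<beta>)^2 + \<alpha>*\<beta>^2" using a by simp
    ultimately show ?thesis by linarith
  qed
  hence "((1-\<alpha>)*e + \<beta>)^2 \<le> (1 - \<alpha>) * e^2 + (1 + 1/\<alpha>) * \<beta>^2"
    using a(1) by (simp add: mult_le_cancel_left_pos)
  ultimately show ?thesis by linarith
qed

lemma pathwise:
  fixes x y T \<zeta>2 v :: "nat \<Rightarrow> real^'d" and \<gamma> R :: "nat \<Rightarrow> real" and nrm :: "real^'d \<Rightarrow> real"
    and A :: "real^'d^'d"
  assumes c: "c > 0" and Kp: "Kp > 0" and B1: "B1 \<ge> 0"
    and n1: "\<forall>v. norm v \<le> nrm v" and n2: "\<forall>v. nrm v \<le> Kp * norm v"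
    and n3: "\<forall>u v. nrm (u + v) \<le> nrm u + nrm v"
    and n4: "\<forall>t v. 0 \<le> t \<longrightarrow> t \<le> hh \<longrightarrow> nrm (v + t *\<^sub>R (A *v v)) \<le> (1 - c * t) * nrm v"
    and D: "\<forall>n\<ge>N1. 0 < \<gamma> (Suc n) \<and> \<gamma> (Suc n) \<le> hh \<and> c/4 * \<gamma> (Suc n) \<le> 1/2 \<and> c * \<gamma> (Suc n) \<le> 1
         \<and> \<gamma> (Suc n) \<le> 1 \<and> 0 < \<gamma> n \<and> \<gamma> n / \<gamma> (Suc n) \<le> 1 + c/4 * \<gamma> (Suc n)"
    and xyT: "\<forall>n. x n = y n + T n"
    and yrec: "\<forall>n. y (Suc n) = y n + \<gamma> (Suc n) *\<^sub>R (A *v y n) + \<gamma> (Suc n) *\<^sub>R \<zeta>2 (Suc n)"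
    and z2: "\<forall>n\<ge>N1. norm (\<zeta>2 (Suc n)) \<le> (c/4/Kp) * norm (x (Suc n))"
    and Tb: "\<forall>n\<ge>N1. norm (T n) \<le> 2 * sqrt (\<gamma> n) * B1 * norm (v n)"
    and Rrec: "\<forall>n\<ge>N1. R (Suc n) = (1 - c/2 * \<gamma> (Suc n)) * R n + \<gamma> (Suc n) * (norm (v (Suc n)))^2"
    and R0: "\<forall>n. 0 \<le> R n"
  shows "\<exists>K. \<forall>n\<ge>N1. (norm (x n))^2 / \<gamma> n \<le> K * (1 + R n + (norm (v n))^2)"
proof -
  define a where "a = c/4"
  define e where "e n = nrm (y n)" for n
  define q where "q n = (e n)^2 / \<gamma> n" for n
  define L where "L = 16 * a^2 * B1^2 * (1 + 4/(3*c))"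
  have e0: "0 \<le> e n" for n using n1 norm_ge_zero unfolding e_def by (meson order_trans)
  have L0: "0 \<le> L" using c by (simp add: L_def)
  have stp: "q (Suc n) \<le> (1 - c/2 * \<gamma> (Suc n)) * q n + \<gamma> (Suc n) * (L * (norm (v (Suc n)))^2)"
    if n: "n \<ge> N1" for n
  proof -
    define t where "t = \<gamma> (Suc n)"
    have Dn: "0 < t" "t \<le> hh" "a * t \<le> 1/2" "c * t \<le> 1" "t \<le> 1" "0 < \<gamma> n" "\<gamma> n / t \<le> 1 + a * t"
      using D n unfolding t_def a_def by auto
    have TS: "norm (T (Suc n)) \<le> 2 * sqrt t * B1 * norm (v (Suc n))"
      using Tb n unfolding t_def by auto
    have "e (Suc n) \<le> nrm (y n + t *\<^sub>R (A *v y n)) + nrm (t *\<^sub>R \<zeta>2 (Suc n))"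
      unfolding e_def t_def using yrec n3 by metis
    also have "\<dots> \<le> (1 - c * t) * e n + Kp * (t * norm (\<zeta>2 (Suc n)))"
      using n4 Dn n2[rule_format, of "t *\<^sub>R \<zeta>2 (Suc n)"] unfolding e_def by (intro add_mono) auto
    also have "Kp * (t * norm (\<zeta>2 (Suc n))) \<le> Kp * (t * ((a/Kp) * (e (Suc n) + norm (T (Suc n)))))"
    proof -
      have "norm (x (Suc n)) \<le> norm (y (Suc n)) + norm (T (Suc n))"
        unfolding xyT[rule_format] by (rule norm_triangle_ineq)
      also have "\<dots> \<le> e (Suc n) + norm (T (Suc n))" using n1[rule_format, of "y (Suc n)"] unfolding e_def by simp
      finally have xx: "norm (x (Suc n)) \<le> e (Suc n) + norm (T (Suc n))" .
      have z: "norm (\<zeta>2 (Suc n)) \<le> (a/Kp) * norm (x (Suc n))" using z2 n unfolding a_def by auto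
      have "(a/Kp) * norm (x (Suc n)) \<le> (a/Kp) * (e (Suc n) + norm (T (Suc n)))"
        using xx Kp c unfolding a_def by (intro mult_left_mono) auto
      hence "norm (\<zeta>2 (Suc n)) \<le> (a/Kp) * (e (Suc n) + norm (T (Suc n)))" using z by linarith
      thus ?thesis using Kp Dn by (intro mult_left_mono) auto
    qed
    also have "Kp * (t * ((a/Kp) * (e (Suc n) + norm (T (Suc n))))) = a * t * e (Suc n) + a * t * norm (T (Suc n))"
      using Kp by (simp add: field_simps)
    finally have h1: "(1 - a*t) * e (Suc n) \<le> (1 - c*t) * e n + a * t * norm (T (Suc n))"
      by (simp add: algebra_simps)
    have h2: "(1 - a*t) * e (Suc n) \<le> (1 - a*t) * ((1 - 3*c/4*t) * e n + 2 * a * t * norm (T (Suc n)))"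
    proof -
      have "(1 - c*t) \<le> (1 - a*t) * (1 - 3*c/4*t)"
      proof -
        have "0 \<le> (a*t) * (3*c/4*t)" using c Dn by (simp add: a_def)
        moreover have "(1 - a*t) * (1 - 3*c/4*t) = 1 - c*t + (a*t) * (3*c/4*t)"
          by (simp add: a_def field_simps)
        ultimately show ?thesis by linarith
      qed
      hence i1: "(1 - c*t) * e n \<le> (1 - a*t) * (1 - 3*c/4*t) * e n" using e0 by (intro mult_right_mono) auto
      have "a * t \<le> (1 - a*t) * (2 * a * t)"
      proof -
        define u where "u = a * t"
        have u: "0 \<le> u" "u \<le> 1/2" using Dn c by (auto simp: u_def a_def)
        have "u * u \<le> u * (1/2)" using u by (intro mult_left_mono) auto
        moreover have "(1 - u) * (2 * u) = 2 * u - 2 * (u * u)" by (simp add: algebra_simps)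
        ultimately have "u \<le> (1 - u) * (2 * u)" by linarith
        thus ?thesis by (simp add: u_def mult.assoc)
      qed
      hence i2: "a * t * norm (T (Suc n)) \<le> (1 - a*t) * (2 * a * t) * norm (T (Suc n))"
        by (intro mult_right_mono) auto
      show ?thesis using h1 i1 i2 by (simp add: algebra_simps)
    qed
    have pos: "0 < 1 - a*t" using Dn by simp
    have h3: "e (Suc n) \<le> (1 - 3*c/4*t) * e n + 2 * a * t * norm (T (Suc n))"
      using h2 pos by (simp add: mult_le_cancel_left_pos)
    define \<alpha> where "\<alpha> = 3*c/4*t"
    define \<beta> where "\<beta> = 2 * a * t * norm (T (Suc n))"
    have al: "0 < \<alpha>" "\<alpha> \<le> 1" using c Dn by (auto simp: \<alpha>_def)
    have be: "0 \<le> \<beta>" using c Dn by (simp add: \<beta>_def a_def)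
    have sq: "(e (Suc n))^2 \<le> (1 - \<alpha>) * (e n)^2 + (1 + 1/\<alpha>) * \<beta>^2"
      using sq_step[OF al e0 _ e0 be] h3 unfolding \<alpha>_def \<beta>_def by simp
    have Tsq: "(norm (T (Suc n)))^2 \<le> 4 * t * B1^2 * (norm (v (Suc n)))^2"
    proof -
      have "(norm (T (Suc n)))^2 \<le> (2 * sqrt t * B1 * norm (v (Suc n)))^2"
        using TS by (intro power_mono) auto
      also have "\<dots> = 4 * t * B1^2 * (norm (v (Suc n)))^2"
        using Dn by (simp add: power_mult_distrib)
      finally show ?thesis .
    qed
    have "(1 + 1/\<alpha>) * \<beta>^2 = (1 + 1/\<alpha>) * (4 * a^2 * t^2) * (norm (T (Suc n)))^2"
      by (simp add: \<beta>_def power_mult_distrib)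
    also have "\<dots> \<le> (1 + 1/\<alpha>) * (4 * a^2 * t^2) * (4 * t * B1^2 * (norm (v (Suc n)))^2)"
      using al by (intro mult_left_mono Tsq) auto
    also have "\<dots> = t * (16 * a^2 * B1^2 * (norm (v (Suc n)))^2) * (t^2 + 4/(3*c) * t)"
      using al c Dn by (simp add: \<alpha>_def field_simps power2_eq_square)
    also have "\<dots> \<le> t * (16 * a^2 * B1^2 * (norm (v (Suc n)))^2) * (t + 4/(3*c) * t)"
    proof -
      have "t^2 \<le> t" using Dn by (simp add: power2_eq_square mult_le_cancel_right1)
      thus ?thesis using Dn by (intro mult_left_mono) auto
    qed
    also have "\<dots> = t * (t * (L * (norm (v (Suc n)))^2))"
      by (simp add: L_def algebra_simps)
    finally have b2: "(1 + 1/\<alpha>) * \<beta>^2 \<le> t * (t * (L * (norm (v (Suc n)))^2))" .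
    have "q (Suc n) = (e (Suc n))^2 / t" by (simp add: q_def t_def)
    also have "\<dots> \<le> ((1 - \<alpha>) * (e n)^2 + t * (t * (L * (norm (v (Suc n)))^2))) / t"
      using sq b2 Dn by (intro divide_right_mono) auto
    also have "\<dots> = (1 - \<alpha>) * (\<gamma> n / t) * q n + t * (L * (norm (v (Suc n)))^2)"
      using Dn by (simp add: q_def field_simps)
    also have "(1 - \<alpha>) * (\<gamma> n / t) * q n \<le> (1 - \<alpha>) * (1 + a * t) * q n"
    proof -
      have "0 \<le> q n" using Dn by (simp add: q_def)
      moreover have "0 \<le> 1 - \<alpha>" using al by simp
      ultimately show ?thesis using Dn by (intro mult_right_mono mult_left_mono) auto
    qed
    also have "(1 - \<alpha>) * (1 + a * t) * q n \<le> (1 - c/2 * t) * q n"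
    proof -
      have "(1 - \<alpha>) * (1 + a * t) \<le> 1 - c/2 * t"
        using c Dn by (simp add: \<alpha>_def a_def algebra_simps power2_eq_square)
      moreover have "0 \<le> q n" using Dn by (simp add: q_def)
      ultimately show ?thesis by (intro mult_right_mono)
    qed
    finally show ?thesis by (simp add: t_def)
  qed
  define P where "P = max (q N1 - L * R N1) 0"
  have qR: "q n \<le> L * R n + P" if "n \<ge> N1" for n
    using that
  proof (induction n rule: dec_induct)
    case base show ?case by (simp add: P_def)
  next
    case (step m)
    have Dm: "0 < \<gamma> (Suc m)" "c * \<gamma> (Suc m) \<le> 1" using D step by auto
    have "q (Suc m) \<le> (1 - c/2 * \<gamma> (Suc m)) * q m + \<gamma> (Suc m) * (L * (norm (v (Suc m)))^2)"
      using \<open>N1 \<le> m\<close> by (rule stp)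
    also have "\<dots> \<le> (1 - c/2 * \<gamma> (Suc m)) * (L * R m + P) + \<gamma> (Suc m) * (L * (norm (v (Suc m)))^2)"
      using step.IH Dm c L0 by (intro add_mono mult_left_mono) auto
    also have "\<dots> = L * R (Suc m) + (1 - c/2 * \<gamma> (Suc m)) * P"
      by (simp add: Rrec[rule_format, OF \<open>N1 \<le> m\<close>] algebra_simps)
    also have "\<dots> \<le> L * R (Suc m) + P"
    proof -
      have "0 \<le> P" by (simp add: P_def)
      thus ?thesis using Dm c by (simp add: mult_left_le_one_le mult_le_cancel_right1)
    qed
    finally show ?case .
  qed
  define Kw where "Kw = 2 * L + 2 * P + 8 * B1^2"
  show ?thesis
  proof (intro exI[of _ Kw] allI impI)
    fix n assume n: "N1 \<le> n"
    have gn: "0 < \<gamma> n" using D n by auto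
    have "norm (x n) \<le> e n + norm (T n)"
      using xyT n1 norm_triangle_ineq unfolding e_def by (metis add_mono order_trans order_refl)
    hence "(norm (x n))^2 \<le> (e n + norm (T n))^2" by (intro power_mono) auto
    also have "\<dots> \<le> 2 * (e n)^2 + 2 * (norm (T n))^2"
    proof -
      have "(e n + norm (T n))^2 = 2 * (e n)^2 + 2 * (norm (T n))^2 - (e n - norm (T n))^2"
        by (simp add: power2_eq_square algebra_simps)
      moreover have "0 \<le> (e n - norm (T n))^2" by simp
      ultimately show ?thesis by linarith
    qed
    finally have xb: "(norm (x n))^2 \<le> 2 * (e n)^2 + 2 * (norm (T n))^2" .
    have "(norm (T n))^2 \<le> 4 * \<gamma> n * B1^2 * (norm (v n))^2"
    proof -
      have "(norm (T n))^2 \<le> (2 * sqrt (\<gamma> n) * B1 * norm (v n))^2"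
        using Tb n by (intro power_mono) auto
      thus ?thesis using gn by (simp add: power_mult_distrib)
    qed
    hence "(norm (x n))^2 / \<gamma> n \<le> (2 * (e n)^2 + 2 * (4 * \<gamma> n * B1^2 * (norm (v n))^2)) / \<gamma> n"
      using xb gn by (intro divide_right_mono) auto
    also have "\<dots> = 2 * q n + 8 * B1^2 * (norm (v n))^2"
      using gn by (simp add: q_def field_simps)
    also have "\<dots> \<le> 2 * (L * R n + P) + 8 * B1^2 * (norm (v n))^2"
      using qR[OF n] by simp
    also have "\<dots> \<le> Kw * (1 + R n + (norm (v n))^2)"
    proof -
      have "0 \<le> P" by (simp add: P_def)
      thus ?thesis using L0 R0[rule_format, of n]
        by (simp add: Kw_def algebra_simps add_nonneg_nonneg mult_nonneg_nonneg)
    qed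
    finally show "(norm (x n))^2 / \<gamma> n \<le> Kw * (1 + R n + (norm (v n))^2)" .
  qed
qed



fun Tseq :: "(nat \<Rightarrow> real) \<Rightarrow> real^'d^'d \<Rightarrow> (nat \<Rightarrow> real^'d) \<Rightarrow> nat \<Rightarrow> real^'d" where
  "Tseq g A z 0 = 0"
| "Tseq g A z (Suc m) = (mat 1 + g (Suc m) *\<^sub>R A) *v Tseq g A z m + g (Suc m) *\<^sub>R z (Suc m)"

fun Rseq :: "nat \<Rightarrow> real \<Rightarrow> (nat \<Rightarrow> real) \<Rightarrow> (nat \<Rightarrow> real) \<Rightarrow> nat \<Rightarrow> real" where
  "Rseq N0 b g u 0 = 0"
| "Rseq N0 b g u (Suc m) = (if m < N0 then 0 else (1 - b * g (Suc m)) * Rseq N0 b g u m + g (Suc m) * u (Suc m))"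

lemma matrix_add_rdistrib': "((B::'a::semiring_1^'n^'m) + C) ** D = B ** D + C ** D"
  by (simp add: matrix_matrix_mult_def Finite_Cartesian_Product.vec_eq_iff sum.distrib distrib_right)

lemma fmul_expand:
  fixes A :: "real^'d^'d"
  shows "(mat 1 + a *\<^sub>R A) ** (mat 1 + b *\<^sub>R A) = mat 1 + (a + b) *\<^sub>R A + (a * b) *\<^sub>R (A ** A)"
  by (simp add: matrix_add_ldistrib matrix_add_rdistrib' matrix_scalar_ac scalar_matrix_assoc[symmetric] scaleR_add_left scaleR_add_right mult.commute)

lemma fcomm:
  fixes A :: "real^'d^'d"
  shows "(mat 1 + a *\<^sub>R A) ** (mat 1 + b *\<^sub>R A) = (mat 1 + b *\<^sub>R A) ** (mat 1 + a *\<^sub>R A)"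
  by (simp add: fmul_expand add.commute mult.commute)

lemma foldr_mul_right:
  "foldr (\<lambda>j P. f j ** P) xs Q = foldr (\<lambda>j P. f j ** P) xs (mat 1) ** (Q::real^'d^'d)"
  by (induction xs) (simp_all add: matrix_mul_assoc)

lemma foldr_comm:
  assumes "\<And>j. f j ** Q = Q ** (f j::real^'d^'d)"
  shows "foldr (\<lambda>j P. f j ** P) xs (mat 1) ** Q = Q ** foldr (\<lambda>j P. f j ** P) xs (mat 1)"
proof (induction xs)
  case Nil show ?case by simp
next
  case (Cons a xs)
  let ?F = "foldr (\<lambda>j P. f j ** P) xs (mat 1)"
  have "(f a ** ?F) ** Q = f a ** (?F ** Q)" by (simp add: matrix_mul_assoc)
  also have "\<dots> = f a ** (Q ** ?F)" using Cons by simp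
  also have "\<dots> = (Q ** f a) ** ?F" by (simp add: matrix_mul_assoc assms)
  also have "\<dots> = Q ** (f a ** ?F)" by (simp add: matrix_mul_assoc)
  finally show ?case by simp
qed

lemma mpr_Suc:
  assumes "m \<le> Suc n"
  shows "mat_prod_range f m (Suc n) = mat_prod_range f m n ** (f (Suc n)::real^'d^'d)"
proof -
  have "[m..<Suc (Suc n)] = [m..<Suc n] @ [Suc n]" using assms by simp
  thus ?thesis unfolding mat_prod_range_def using foldr_mul_right[of f "[m..<Suc n]" "f (Suc n)"] by simp
qed

lemma mpr_self: "mat_prod_range f m m = (f m::real^'d^'d)" by (simp add: mat_prod_range_def)

lemma mv_sum: "finite S \<Longrightarrow> (P::real^'d^'d) *v (\<Sum>k\<in>S. g k) = (\<Sum>k\<in>S. P *v g k)"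
  by (induction S rule: finite_induct) (simp_all add: matrix_vector_right_distrib)

lemma smv: "(s *\<^sub>R (A::real^'d^'d)) *v v = s *\<^sub>R (A *v v)"
  by (simp add: Finite_Cartesian_Product.vec_eq_iff matrix_vector_mult_def sum_distrib_left algebra_simps)

lemma fmv: "(mat 1 + s *\<^sub>R (A::real^'d^'d)) *v v = v + s *\<^sub>R (A *v v)"
  by (simp add: matrix_vector_mult_add_rdistrib smv)

lemma Tseq_S:
  fixes A :: "real^'d^'d"
  shows "(\<Sum>k=1..n. g k *\<^sub>R (mat_prod_range (\<lambda>j. mat 1 + g j *\<^sub>R A) (Suc k) (Suc n) *v z k))
        = (mat 1 + g (Suc n) *\<^sub>R A) *v Tseq g A z n"
proof (induction n)
  case 0 show ?case by simp
next
  case (Suc n)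
  define f where "f = (\<lambda>j. mat 1 + g j *\<^sub>R A)"
  define F where "F = f (Suc (Suc n))"
  have comm: "mat_prod_range f m k ** F = F ** mat_prod_range f m k" for m k
    unfolding mat_prod_range_def F_def f_def by (rule foldr_comm) (rule fcomm)
  have "(\<Sum>k=1..Suc n. g k *\<^sub>R (mat_prod_range f (Suc k) (Suc (Suc n)) *v z k))
      = (\<Sum>k=1..n. g k *\<^sub>R (mat_prod_range f (Suc k) (Suc (Suc n)) *v z k)) + g (Suc n) *\<^sub>R (F *v z (Suc n))"
    by (simp add: mpr_self F_def)
  also have "(\<Sum>k=1..n. g k *\<^sub>R (mat_prod_range f (Suc k) (Suc (Suc n)) *v z k))
      = (\<Sum>k=1..n. F *v (g k *\<^sub>R (mat_prod_range f (Suc k) (Suc n) *v z k)))"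
  proof (rule sum.cong[OF refl])
    fix k assume k: "k \<in> {1..n}"
    have "mat_prod_range f (Suc k) (Suc (Suc n)) = F ** mat_prod_range f (Suc k) (Suc n)"
      using mpr_Suc[of "Suc k" "Suc n" f] comm[of "Suc k" "Suc n"] k by (simp add: F_def)
    thus "g k *\<^sub>R (mat_prod_range f (Suc k) (Suc (Suc n)) *v z k) = F *v (g k *\<^sub>R (mat_prod_range f (Suc k) (Suc n) *v z k))"
      by (simp add: mv_scaleR matrix_vector_mul_assoc)
  qed
  also have "\<dots> = F *v (\<Sum>k=1..n. g k *\<^sub>R (mat_prod_range f (Suc k) (Suc n) *v z k))"
    by (simp add: mv_sum)
  also have "\<dots> = F *v ((mat 1 + g (Suc n) *\<^sub>R A) *v Tseq g A z n)" using Suc.IH by (simp add: f_def)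
  finally show ?case by (simp add: F_def f_def mv_scaleR matrix_vector_right_distrib)
qed

lemma Rseq_nonneg:
  assumes "\<forall>m\<ge>N0. 0 \<le> 1 - b * g (Suc m) \<and> 0 \<le> g (Suc m)" "\<forall>m. 0 \<le> u m"
  shows "0 \<le> Rseq N0 b g u n"
proof (induction n)
  case 0 show ?case by simp
next
  case (Suc m) show ?case
    using assms Suc by (cases "m < N0") (auto intro!: add_nonneg_nonneg mult_nonneg_nonneg)
qed

lemma Rseq_meas:
  assumes "\<And>m. u m \<in> borel_measurable M"
  shows "(\<lambda>\<omega>. Rseq N0 b g (\<lambda>m. u m \<omega>) n) \<in> borel_measurable M"
proof (induction n)
  case 0 show ?case by simp
next
  case (Suc m) show ?case
    using assms Suc by (cases "m < N0") (auto intro!: borel_measurable_add borel_measurable_times)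
qed

lemma (in prob_space) Rseq_int:
  assumes int: "\<And>m. integrable M (u m)" and ib: "\<And>m. integral\<^sup>L M (u m) \<le> C"
    and b: "b > 0" and gc: "\<forall>m\<ge>N0. 0 \<le> 1 - b * g (Suc m) \<and> 0 \<le> g (Suc m)"
  shows "integrable M (\<lambda>\<omega>. Rseq N0 b g (\<lambda>m. u m \<omega>) n) \<and> integral\<^sup>L M (\<lambda>\<omega>. Rseq N0 b g (\<lambda>m. u m \<omega>) n) \<le> max C 0 / b"
proof (induction n)
  case 0 show ?case using b by simp
next
  case (Suc m)
  show ?case
  proof (cases "m < N0")
    case True thus ?thesis using b by simp
  next
    case False
    have g: "0 \<le> 1 - b * g (Suc m)" "0 \<le> g (Suc m)" using gc False by auto
    have i1: "integrable M (\<lambda>\<omega>. (1 - b * g (Suc m)) * Rseq N0 b g (\<lambda>m. u m \<omega>) m)"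
      using Suc by (intro integrable_mult_right) auto
    have i2: "integrable M (\<lambda>\<omega>. g (Suc m) * u (Suc m) \<omega>)" using int by (intro integrable_mult_right)
    have "integral\<^sup>L M (\<lambda>\<omega>. Rseq N0 b g (\<lambda>m. u m \<omega>) (Suc m))
        = (1 - b * g (Suc m)) * integral\<^sup>L M (\<lambda>\<omega>. Rseq N0 b g (\<lambda>m. u m \<omega>) m) + g (Suc m) * integral\<^sup>L M (u (Suc m))"
      using False i1 i2 by simp
    also have "\<dots> \<le> (1 - b * g (Suc m)) * (max C 0 / b) + g (Suc m) * max C 0"
      using Suc g ib[of "Suc m"] by (intro add_mono mult_left_mono) auto
    also have "\<dots> = max C 0 / b" using b by (simp add: field_simps)
    finally show ?thesis using False i1 i2 by simp
  qed
qed



theorem lemma1: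
  fixes M :: "'a measure"
    and \<gamma> :: "nat \<Rightarrow> real"
    and A :: "real^'d^'d"
    and x \<zeta>1 \<zeta>2 :: "nat \<Rightarrow> 'a \<Rightarrow> real^'d"
  assumes "prob_space M"
    and gpos: "\<forall>n\<ge>1. \<gamma> n > 0"
    and gdiv: "\<not> summable \<gamma>"
    and gsq: "summable (\<lambda>k. (\<gamma> k)\<^sup>2)"
    and glog: "(\<lambda>k. ln (\<gamma> k / \<gamma> (Suc k))) \<in> o(\<lambda>k. \<gamma> (Suc k))"
    and hurw: "hurwitz A"
    and xmeas: "\<forall>n. x n \<in> borel_measurable M"
    and z1meas: "\<forall>n. \<zeta>1 n \<in> borel_measurable M"
    and z2meas: "\<forall>n. \<zeta>2 n \<in> borel_measurable M"
    and rec: "\<forall>n. \<forall>\<omega>\<in>space M. x (Suc n) \<omega> =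
        x n \<omega> + \<gamma> (Suc n) *\<^sub>R (A *v x n \<omega>) + \<gamma> (Suc n) *\<^sub>R \<zeta>1 (Suc n) \<omega>
          + \<gamma> (Suc n) *\<^sub>R \<zeta>2 (Suc n) \<omega>"
    and noise1: "\<exists>W Wb. O_wp1 M W \<and> O_Lp M 2 Wb \<and>
        (\<forall>n\<ge>1. \<forall>\<omega>\<in>space M.
           indicator {\<omega>\<in>space M. (\<lambda>q. x q \<omega>) \<longlonglongrightarrow> 0} \<omega> *\<^sub>R
             (\<Sum>k=1..n. \<gamma> k *\<^sub>R
                (mat_prod_range (\<lambda>j. mat 1 + \<gamma> j *\<^sub>R A) (Suc k) (Suc n) *v \<zeta>1 k \<omega>))
           = (sqrt (\<gamma> n) * W n \<omega>) *\<^sub>R Wb n \<omega>)"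
    and noise2: "\<exists>W. O_wp1 M W \<and>
        (\<forall>n\<ge>1. \<forall>\<omega>\<in>space M.
           norm (\<zeta>2 n \<omega>) * indicator {\<omega>\<in>space M. (\<lambda>q. x q \<omega>) \<longlonglongrightarrow> 0} \<omega>
           = (norm (x n \<omega>))\<^sup>2 * W n \<omega>)"
  shows "\<exists>W (Wb :: nat \<Rightarrow> 'a \<Rightarrow> real). O_wp1 M W \<and> O_Lp M 1 Wb \<and>
        (\<forall>n\<ge>1. \<forall>\<omega>\<in>space M.
           (norm (x n \<omega>))\<^sup>2 / \<gamma> n * indicator {\<omega>\<in>space M. (\<lambda>q. x q \<omega>) \<longlonglongrightarrow> 0} \<omega>
           = W n \<omega> * Wb n \<omega>)"
proof -
  interpret prob_space M by (rule assms(1))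
  obtain nrm c hh K where c: "c > 0" and hh: "hh > 0" and n1: "\<forall>v. norm v \<le> nrm v"
      and n2: "\<forall>v. nrm v \<le> K * norm v" and n3: "\<forall>u v. nrm (u + v) \<le> nrm u + nrm v"
      and n4: "\<forall>t v. 0 \<le> t \<longrightarrow> t \<le> hh \<longrightarrow> nrm (v + t *\<^sub>R (A *v v)) \<le> (1 - c * t) * nrm v"
    using hurwitz_contraction[OF hurw] by blast
  define Kp where "Kp = max K 1"
  have Kp: "Kp > 0" by (simp add: Kp_def)
  have n2': "\<forall>v. nrm v \<le> Kp * norm v"
  proof
    fix v :: "real^'d" have "K * norm v \<le> Kp * norm v" by (intro mult_right_mono) (auto simp: Kp_def)
    thus "nrm v \<le> Kp * norm v" using n2 by (meson order_trans)
  qed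
  obtain NA where NA: "NA > 0" "\<forall>v. norm (A *v v) \<le> norm v * NA"
    using bounded_linear.pos_bounded[OF matrix_vector_mul_bounded_linear[of A]] by blast
  define \<epsilon> where "\<epsilon> = c/8"
  have eps: "\<epsilon> > 0" using c by (simp add: \<epsilon>_def)
  have g0: "\<gamma> \<longlonglongrightarrow> 0"
  proof -
    have "(\<lambda>k. (\<gamma> k)\<^sup>2) \<longlonglongrightarrow> 0" using summable_LIMSEQ_zero[OF gsq] .
    hence "(\<lambda>k. sqrt ((\<gamma> k)\<^sup>2)) \<longlonglongrightarrow> sqrt 0" by (rule tendsto_real_sqrt)
    hence "(\<lambda>k. \<bar>\<gamma> k\<bar>) \<longlonglongrightarrow> 0" by simp
    thus ?thesis by (simp add: tendsto_rabs_zero_iff)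
  qed
  have evs: "eventually (\<lambda>n. \<gamma> (Suc n) < e) sequentially" if "e > 0" for e
    using eventually_sequentially_Suc[of "\<lambda>n. \<gamma> n < e"] order_tendstoD(2)[OF g0 that] by blast
  have evl: "eventually (\<lambda>k. norm (ln (\<gamma> k / \<gamma> (Suc k))) \<le> \<epsilon> * norm (\<gamma> (Suc k))) sequentially"
    using landau_o.smallD[OF glog eps] by simp
  have evp: "eventually (\<lambda>n. 1 \<le> n \<and> 0 < \<gamma> (Suc n) \<and> 0 < \<gamma> n) sequentially"
    using eventually_ge_at_top[of "1::nat"] by eventually_elim (use gpos in auto)
  have "eventually (\<lambda>n. (1 \<le> n \<and> 0 < \<gamma> (Suc n) \<and> 0 < \<gamma> n) \<and> \<gamma> (Suc n) < hh \<and> \<gamma> (Suc n) < 1/(2*NA)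
      \<and> \<gamma> (Suc n) < 1/c \<and> \<gamma> (Suc n) < 1 \<and> \<gamma> (Suc n) < 1/\<epsilon>
      \<and> norm (ln (\<gamma> n / \<gamma> (Suc n))) \<le> \<epsilon> * norm (\<gamma> (Suc n))) sequentially"
  proof -
    have p1: "1/(2*NA) > 0" "1/c > 0" "(1::real) > 0" "1/\<epsilon> > 0" using NA c eps by auto
    show ?thesis using evp evs[OF hh] evs[OF p1(1)] evs[OF p1(2)] evs[OF p1(3)] evs[OF p1(4)] evl
      by eventually_elim blast
  qed
  then obtain N0 where N0: "\<forall>n\<ge>N0. (1 \<le> n \<and> 0 < \<gamma> (Suc n) \<and> 0 < \<gamma> n) \<and> \<gamma> (Suc n) < hh \<and> \<gamma> (Suc n) < 1/(2*NA)
      \<and> \<gamma> (Suc n) < 1/c \<and> \<gamma> (Suc n) < 1 \<and> \<gamma> (Suc n) < 1/\<epsilon>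
      \<and> norm (ln (\<gamma> n / \<gamma> (Suc n))) \<le> \<epsilon> * norm (\<gamma> (Suc n))"
    unfolding eventually_sequentially by blast
  have D: "1 \<le> n \<and> 0 < \<gamma> (Suc n) \<and> 0 < \<gamma> n \<and> \<gamma> (Suc n) \<le> hh \<and> \<gamma> (Suc n) * NA \<le> 1/2
      \<and> c/4 * \<gamma> (Suc n) \<le> 1/2 \<and> c * \<gamma> (Suc n) \<le> 1 \<and> \<gamma> (Suc n) \<le> 1
      \<and> \<gamma> n / \<gamma> (Suc n) \<le> 1 + c/4 * \<gamma> (Suc n)" if n: "n \<ge> N0" for n
  proof -
    define t where "t = \<gamma> (Suc n)"
    have h: "1 \<le> n" "0 < t" "0 < \<gamma> n" "t < hh" "t < 1/(2*NA)" "t < 1/c" "t < 1" "t < 1/\<epsilon>"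
        "norm (ln (\<gamma> n / t)) \<le> \<epsilon> * norm t"
      using N0 n unfolding t_def by auto
    have tNA: "t * NA \<le> 1/2" using h(5) NA by (simp add: field_simps)
    have ct: "c * t \<le> 1" using h(6) c by (simp add: field_simps)
    have et: "\<epsilon> * t \<le> 1" using h(8) eps by (simp add: field_simps)
    have et0: "0 \<le> \<epsilon> * t" using h eps by simp
    have "\<gamma> n / t = exp (ln (\<gamma> n / t))" using h by simp
    also have "\<dots> \<le> exp (\<epsilon> * t)" using h(9) h(2) by simp
    also have "\<dots> \<le> 1 + \<epsilon> * t + (\<epsilon> * t)^2" using exp_bound[OF et0 et] .
    also have "\<dots> \<le> 1 + c/4 * t"
    proof -
      have "(\<epsilon> * t)^2 \<le> \<epsilon> * t" using mult_left_le[OF et et0] by (simp add: power2_eq_square)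
      thus ?thesis by (simp add: \<epsilon>_def)
    qed
    finally have r: "\<gamma> n / t \<le> 1 + c/4 * t" .
    show ?thesis using h tNA ct r c unfolding t_def by auto
  qed
  obtain W1 Wb where W1: "O_wp1 M W1" and Wb: "O_Lp M 2 Wb" and eq1: "\<forall>n\<ge>1. \<forall>\<omega>\<in>space M.
           indicator {\<omega>\<in>space M. (\<lambda>q. x q \<omega>) \<longlonglongrightarrow> 0} \<omega> *\<^sub>R
             (\<Sum>k=1..n. \<gamma> k *\<^sub>R
                (mat_prod_range (\<lambda>j. mat 1 + \<gamma> j *\<^sub>R A) (Suc k) (Suc n) *v \<zeta>1 k \<omega>))
           = (sqrt (\<gamma> n) * W1 n \<omega>) *\<^sub>R Wb n \<omega>"
    using noise1 by blast
  obtain W2 where W2: "O_wp1 M W2" and eq2: "\<forall>n\<ge>1. \<forall>\<omega>\<in>space M.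
           norm (\<zeta>2 n \<omega>) * indicator {\<omega>\<in>space M. (\<lambda>q. x q \<omega>) \<longlonglongrightarrow> 0} \<omega>
           = (norm (x n \<omega>))\<^sup>2 * W2 n \<omega>"
    using noise2 by blast
  define Cv where "Cv = {\<omega>\<in>space M. (\<lambda>q. x q \<omega>) \<longlonglongrightarrow> 0}"
  define T where "T n \<omega> = Tseq \<gamma> A (\<lambda>k. \<zeta>1 k \<omega>) n" for n \<omega>
  define y where "y n \<omega> = x n \<omega> - T n \<omega>" for n \<omega>
  define R where "R n \<omega> = Rseq N0 (c/2) \<gamma> (\<lambda>m. (norm (Wb m \<omega>))\<^sup>2) n" for n \<omega>
  define Z where "Z n \<omega> = 1 + R n \<omega> + (norm (Wb n \<omega>))\<^sup>2" for n \<omega>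
  have gc: "\<forall>m\<ge>N0. 0 \<le> 1 - c/2 * \<gamma> (Suc m) \<and> 0 \<le> \<gamma> (Suc m)"
  proof (intro allI impI)
    fix m assume "N0 \<le> m"
    hence "0 < \<gamma> (Suc m)" "c * \<gamma> (Suc m) \<le> 1" using D by auto
    thus "0 \<le> 1 - c/2 * \<gamma> (Suc m) \<and> 0 \<le> \<gamma> (Suc m)" using c by auto
  qed
  have R0: "0 \<le> R n \<omega>" for n \<omega> unfolding R_def by (rule Rseq_nonneg[OF gc]) auto
  have Z1: "1 \<le> Z n \<omega>" for n \<omega> using R0[of n \<omega>] by (simp add: Z_def)
  have Rrec: "R (Suc n) \<omega> = (1 - c/2 * \<gamma> (Suc n)) * R n \<omega> + \<gamma> (Suc n) * (norm (Wb (Suc n) \<omega>))\<^sup>2"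
    if "n \<ge> N0" for n \<omega> using that by (simp add: R_def)
  have Wbm[measurable]: "Wb n \<in> borel_measurable M" for n using Wb unfolding O_Lp_def by blast
  have xm[measurable]: "x n \<in> borel_measurable M" for n using xmeas by blast
  have Rm[measurable]: "R n \<in> borel_measurable M" for n
    unfolding R_def[abs_def] by (rule Rseq_meas) measurable
  have Zm[measurable]: "Z n \<in> borel_measurable M" for n unfolding Z_def[abs_def] by measurable
  have Cvm[measurable]: "Cv \<in> sets M" unfolding Cv_def by measurable
  obtain C2 where C2: "\<forall>n. (\<integral>\<^sup>+ \<omega>. ennreal (norm (Wb n \<omega>) powr 2) \<partial>M) \<le> ennreal C2"
    using Wb unfolding O_Lp_def by blast
  have vint: "integrable M (\<lambda>\<omega>. (norm (Wb n \<omega>))\<^sup>2) \<and> integral\<^sup>L M (\<lambda>\<omega>. (norm (Wb n \<omega>))\<^sup>2) \<le> max C2 0" for n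
  proof -
    have e: "(\<integral>\<^sup>+ \<omega>. ennreal ((norm (Wb n \<omega>))\<^sup>2) \<partial>M) \<le> ennreal (max C2 0)"
    proof -
      have "(\<integral>\<^sup>+ \<omega>. ennreal ((norm (Wb n \<omega>))\<^sup>2) \<partial>M) = (\<integral>\<^sup>+ \<omega>. ennreal (norm (Wb n \<omega>) powr 2) \<partial>M)"
        by simp
      also have "\<dots> \<le> ennreal C2" using C2 by blast
      also have "\<dots> \<le> ennreal (max C2 0)" by (rule ennreal_leI) simp
      finally show ?thesis .
    qed
    have i: "integrable M (\<lambda>\<omega>. (norm (Wb n \<omega>))\<^sup>2)"
      using e by (intro integrableI_nonneg) (auto simp: top.not_eq_extremum intro: le_less_trans)
    have "ennreal (integral\<^sup>L M (\<lambda>\<omega>. (norm (Wb n \<omega>))\<^sup>2)) \<le> ennreal (max C2 0)"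
      using e nn_integral_eq_integral[OF i] by simp
    hence "integral\<^sup>L M (\<lambda>\<omega>. (norm (Wb n \<omega>))\<^sup>2) \<le> max C2 0"
      by (metis ennreal_le_iff max.cobounded2)
    thus ?thesis using i by simp
  qed
  have Rint: "integrable M (R n) \<and> integral\<^sup>L M (R n) \<le> max (max C2 0) 0 / (c/2)" for n
    unfolding R_def[abs_def]
    by (rule Rseq_int) (use vint c gc in auto)
  have Zint: "integrable M (Z n) \<and> integral\<^sup>L M (Z n) \<le> 1 + max C2 0 / (c/2) + max C2 0" for n
  proof -
    have i1: "integrable M (\<lambda>\<omega>. 1 + R n \<omega>)"
    proof -
      have "integrable M (R n)" using Rint by blast
      thus ?thesis by (intro Bochner_Integration.integrable_add integrable_const)
    qed
    have vi: "integrable M (\<lambda>\<omega>. (norm (Wb n \<omega>))\<^sup>2)" using vint by blast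
    have ri: "integrable M (R n)" using Rint by blast
    have i: "integrable M (Z n)"
    proof -
      have "integrable M (\<lambda>\<omega>. (norm (Wb n \<omega>))\<^sup>2)" using vint by blast
      with i1 have "integrable M (\<lambda>\<omega>. 1 + R n \<omega> + (norm (Wb n \<omega>))\<^sup>2)"
        by (rule Bochner_Integration.integrable_add)
      thus ?thesis by (simp add: Z_def[abs_def])
    qed
    have "integral\<^sup>L M (Z n) = 1 + integral\<^sup>L M (R n) + integral\<^sup>L M (\<lambda>\<omega>. (norm (Wb n \<omega>))\<^sup>2)"
    proof -
      have "integral\<^sup>L M (Z n) = integral\<^sup>L M (\<lambda>\<omega>. 1 + R n \<omega>) + integral\<^sup>L M (\<lambda>\<omega>. (norm (Wb n \<omega>))\<^sup>2)"
        unfolding Z_def[abs_def] by (rule Bochner_Integration.integral_add[OF i1 vi])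
      moreover have "integral\<^sup>L M (\<lambda>\<omega>. 1 + R n \<omega>) = integral\<^sup>L M (\<lambda>\<omega>. 1) + integral\<^sup>L M (R n)"
        by (rule Bochner_Integration.integral_add[OF integrable_const ri])
      moreover have "integral\<^sup>L M (\<lambda>\<omega>. 1::real) = 1" by (simp add: prob_space)
      ultimately show ?thesis by simp
    qed
    thus ?thesis using i Rint[of n] vint[of n] by simp
  qed
  have Tb0: "norm (T n \<omega>) \<le> 2 * norm ((mat 1 + \<gamma> (Suc n) *\<^sub>R A) *v T n \<omega>)" if "n \<ge> N0" for n \<omega>
  proof -
    have "T n \<omega> = (mat 1 + \<gamma> (Suc n) *\<^sub>R A) *v T n \<omega> - \<gamma> (Suc n) *\<^sub>R (A *v T n \<omega>)"
      by (simp add: fmv)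
    hence "norm (T n \<omega>) \<le> norm ((mat 1 + \<gamma> (Suc n) *\<^sub>R A) *v T n \<omega>) + \<gamma> (Suc n) * norm (A *v T n \<omega>)"
      using D[OF that] by (metis norm_triangle_ineq4 norm_scaleR abs_of_pos)
    also have "\<gamma> (Suc n) * norm (A *v T n \<omega>) \<le> \<gamma> (Suc n) * (norm (T n \<omega>) * NA)"
      using D[OF that] NA by (intro mult_left_mono) auto
    also have "\<gamma> (Suc n) * (norm (T n \<omega>) * NA) \<le> norm (T n \<omega>) / 2"
    proof -
      have "\<gamma> (Suc n) * NA \<le> 1/2" using D[OF that] by auto
      hence "(\<gamma> (Suc n) * NA) * norm (T n \<omega>) \<le> (1/2) * norm (T n \<omega>)" by (intro mult_right_mono) auto
      thus ?thesis by (simp add: algebra_simps)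
    qed
    finally show ?thesis by simp
  qed
  have yrec: "y (Suc n) \<omega> = y n \<omega> + \<gamma> (Suc n) *\<^sub>R (A *v y n \<omega>) + \<gamma> (Suc n) *\<^sub>R \<zeta>2 (Suc n) \<omega>"
    if "\<omega> \<in> space M" for n \<omega>
    using rec that by (simp add: y_def T_def fmv smv matrix_vector_mult_diff_distrib algebra_simps)
  have mainb: "\<exists>Kf\<ge>0. \<forall>n\<ge>1. (norm (x n \<omega>))\<^sup>2 / \<gamma> n \<le> Kf * Z n \<omega>"
    if \<omega>: "\<omega> \<in> space M" "\<omega> \<in> Cv" and b1: "\<forall>n. \<bar>W1 n \<omega>\<bar> \<le> B1" and b2: "\<forall>n. \<bar>W2 n \<omega>\<bar> \<le> B2"
    for \<omega> B1 B2
  proof -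
    have B1: "B1 \<ge> 0" using b1 by (meson abs_ge_zero order_trans)
    have B2: "B2 \<ge> 0" using b2 by (meson abs_ge_zero order_trans)
    have ind: "indicator {\<omega>\<in>space M. (\<lambda>q. x q \<omega>) \<longlonglongrightarrow> 0} \<omega> = (1::real)"
      using \<omega> by (simp add: Cv_def)
    have xc: "(\<lambda>q. x q \<omega>) \<longlonglongrightarrow> 0" using \<omega> by (simp add: Cv_def)
    define \<delta> where "\<delta> = c/4/Kp"
    have dl: "\<delta> > 0" using c Kp by (simp add: \<delta>_def)
    have "eventually (\<lambda>n. norm (x n \<omega>) < \<delta> / (B2 + 1)) sequentially"
      using order_tendstoD(2)[OF tendsto_norm[OF xc]] dl B2 by simp
    then obtain Nx where Nx: "\<forall>n\<ge>Nx. norm (x n \<omega>) < \<delta> / (B2 + 1)"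
      unfolding eventually_sequentially by blast
    define N1 where "N1 = max N0 Nx"
    have z2: "\<forall>n\<ge>N1. norm (\<zeta>2 (Suc n) \<omega>) \<le> (c/4/Kp) * norm (x (Suc n) \<omega>)"
    proof (intro allI impI)
      fix n assume n: "N1 \<le> n"
      have "norm (\<zeta>2 (Suc n) \<omega>) = (norm (x (Suc n) \<omega>))\<^sup>2 * W2 (Suc n) \<omega>"
        using eq2 \<omega>(1) ind by fastforce
      also have "\<dots> \<le> (norm (x (Suc n) \<omega>))\<^sup>2 * B2"
        using b2 by (intro mult_left_mono) (auto simp: abs_le_iff)
      also have "\<dots> = norm (x (Suc n) \<omega>) * (norm (x (Suc n) \<omega>) * B2)" by (simp add: power2_eq_square)
      also have "\<dots> \<le> norm (x (Suc n) \<omega>) * \<delta>"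
      proof (intro mult_left_mono)
        have "norm (x (Suc n) \<omega>) < \<delta> / (B2 + 1)" using Nx n by (simp add: N1_def)
        hence "norm (x (Suc n) \<omega>) * (B2 + 1) < \<delta>" using B2 by (simp add: field_simps)
        hence "norm (x (Suc n) \<omega>) * B2 + norm (x (Suc n) \<omega>) < \<delta>" by (simp add: distrib_left)
        thus "norm (x (Suc n) \<omega>) * B2 \<le> \<delta>" using norm_ge_zero[of "x (Suc n) \<omega>"] by linarith
      qed simp
      finally show "norm (\<zeta>2 (Suc n) \<omega>) \<le> (c/4/Kp) * norm (x (Suc n) \<omega>)" by (simp add: \<delta>_def mult.commute)
    qed
    have Tb: "\<forall>n\<ge>N1. norm (T n \<omega>) \<le> 2 * sqrt (\<gamma> n) * B1 * norm (Wb n \<omega>)"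
    proof (intro allI impI)
      fix n assume n: "N1 \<le> n"
      hence n0: "n \<ge> N0" by (simp add: N1_def)
      have "1 \<le> n" using D[OF n0] by simp
      hence "indicator {\<omega>\<in>space M. (\<lambda>q. x q \<omega>) \<longlonglongrightarrow> 0} \<omega> *\<^sub>R
             (\<Sum>k=1..n. \<gamma> k *\<^sub>R
                (mat_prod_range (\<lambda>j. mat 1 + \<gamma> j *\<^sub>R A) (Suc k) (Suc n) *v \<zeta>1 k \<omega>))
           = (sqrt (\<gamma> n) * W1 n \<omega>) *\<^sub>R Wb n \<omega>" using eq1 \<omega>(1) by blast
      hence "(\<Sum>k=1..n. \<gamma> k *\<^sub>R
                (mat_prod_range (\<lambda>j. mat 1 + \<gamma> j *\<^sub>R A) (Suc k) (Suc n) *v \<zeta>1 k \<omega>))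
           = (sqrt (\<gamma> n) * W1 n \<omega>) *\<^sub>R Wb n \<omega>" unfolding ind by simp
      hence "(mat 1 + \<gamma> (Suc n) *\<^sub>R A) *v T n \<omega> = (sqrt (\<gamma> n) * W1 n \<omega>) *\<^sub>R Wb n \<omega>"
        unfolding Tseq_S T_def .
      hence "norm ((mat 1 + \<gamma> (Suc n) *\<^sub>R A) *v T n \<omega>) = sqrt (\<gamma> n) * \<bar>W1 n \<omega>\<bar> * norm (Wb n \<omega>)"
        using D[OF n0] by (simp add: abs_mult)
      also have "\<dots> \<le> sqrt (\<gamma> n) * B1 * norm (Wb n \<omega>)"
        using b1 D[OF n0] by (intro mult_right_mono mult_left_mono) auto
      finally show "norm (T n \<omega>) \<le> 2 * sqrt (\<gamma> n) * B1 * norm (Wb n \<omega>)"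
        using Tb0[OF n0, of \<omega>] by simp
    qed
    have DN1: "\<forall>n\<ge>N1. 0 < \<gamma> (Suc n) \<and> \<gamma> (Suc n) \<le> hh \<and> c/4 * \<gamma> (Suc n) \<le> 1/2 \<and> c * \<gamma> (Suc n) \<le> 1
         \<and> \<gamma> (Suc n) \<le> 1 \<and> 0 < \<gamma> n \<and> \<gamma> n / \<gamma> (Suc n) \<le> 1 + c/4 * \<gamma> (Suc n)"
      using D by (simp add: N1_def)
    obtain Kw where Kw: "\<forall>n\<ge>N1. (norm (x n \<omega>))\<^sup>2 / \<gamma> n \<le> Kw * (1 + R n \<omega> + (norm (Wb n \<omega>))\<^sup>2)"
      using pathwise[OF c Kp B1 n1 n2' n3 n4 DN1, of "\<lambda>n. x n \<omega>" "\<lambda>n. y n \<omega>" "\<lambda>n. T n \<omega>"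
          "\<lambda>n. \<zeta>2 n \<omega>" "\<lambda>n. Wb n \<omega>" "\<lambda>n. R n \<omega>"]
        yrec[OF \<omega>(1)] z2 Tb Rrec R0 by (auto simp: y_def N1_def)
    define S0 where "S0 = (\<Sum>m\<in>{1..<N1}. (norm (x m \<omega>))\<^sup>2 / \<gamma> m)"
    have S0: "0 \<le> S0" unfolding S0_def using gpos by (intro sum_nonneg) auto
    show ?thesis
    proof (intro exI[of _ "\<bar>Kw\<bar> + S0"] conjI allI impI)
      show "0 \<le> \<bar>Kw\<bar> + S0" using S0 by simp
      fix n :: nat assume n: "1 \<le> n"
      show "(norm (x n \<omega>))\<^sup>2 / \<gamma> n \<le> (\<bar>Kw\<bar> + S0) * Z n \<omega>"
      proof (cases "n \<ge> N1")
        case True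
        have "(norm (x n \<omega>))\<^sup>2 / \<gamma> n \<le> Kw * Z n \<omega>" using Kw True by (simp add: Z_def)
        also have "\<dots> \<le> (\<bar>Kw\<bar> + S0) * Z n \<omega>" using Z1[of n \<omega>] S0 by (intro mult_right_mono) auto
        finally show ?thesis .
      next
        case False
        have "(norm (x n \<omega>))\<^sup>2 / \<gamma> n \<le> S0" unfolding S0_def
          using False n gpos by (intro member_le_sum) auto
        also have "\<dots> \<le> (\<bar>Kw\<bar> + S0) * 1" by simp
        also have "\<dots> \<le> (\<bar>Kw\<bar> + S0) * Z n \<omega>" using Z1[of n \<omega>] S0 by (intro mult_left_mono) auto
        finally show ?thesis .
      qed
    qed
  qed
  define W' where "W' n \<omega> = (norm (x n \<omega>))\<^sup>2 / \<gamma> n * indicator Cv \<omega> / Z n \<omega>" for n \<omega>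
  have W'm[measurable]: "W' n \<in> borel_measurable M" for n unfolding W'_def[abs_def] by measurable
  have ae1: "AE \<omega> in M. \<exists>B. \<forall>n. \<bar>W1 n \<omega>\<bar> \<le> B" using W1 unfolding O_wp1_def by blast
  have ae2: "AE \<omega> in M. \<exists>B. \<forall>n. \<bar>W2 n \<omega>\<bar> \<le> B" using W2 unfolding O_wp1_def by blast
  have aeW: "AE \<omega> in M. \<exists>B. \<forall>n. \<bar>W' n \<omega>\<bar> \<le> B"
    using ae1 ae2 AE_space
  proof eventually_elim
    case (elim \<omega>)
    then obtain B1 B2 where b1: "\<forall>n. \<bar>W1 n \<omega>\<bar> \<le> B1" and b2: "\<forall>n. \<bar>W2 n \<omega>\<bar> \<le> B2" and sp: "\<omega> \<in> space M"
      by blast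
    show ?case
    proof (cases "\<omega> \<in> Cv")
      case False thus ?thesis by (intro exI[of _ 0]) (simp add: W'_def)
    next
      case True
      obtain Kf where Kf: "Kf \<ge> 0" "\<forall>n\<ge>1. (norm (x n \<omega>))\<^sup>2 / \<gamma> n \<le> Kf * Z n \<omega>"
        using mainb[OF sp True b1 b2] by blast
      show ?thesis
      proof (intro exI[of _ "Kf + \<bar>W' 0 \<omega>\<bar>"] allI)
        fix n show "\<bar>W' n \<omega>\<bar> \<le> Kf + \<bar>W' 0 \<omega>\<bar>"
        proof (cases "n = 0")
          case True thus ?thesis using Kf by simp
        next
          case False
          hence n: "1 \<le> n" by simp
          have Zp: "0 < Z n \<omega>" using Z1[of n \<omega>] by simp
          have gp: "0 < \<gamma> n" using gpos n by auto
          have nn: "0 \<le> (norm (x n \<omega>))\<^sup>2 / \<gamma> n" using gp by (intro divide_nonneg_pos) auto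
          have "\<bar>W' n \<omega>\<bar> = (norm (x n \<omega>))\<^sup>2 / \<gamma> n / Z n \<omega>" using True nn Zp gp by (simp add: W'_def)
          also have "\<dots> \<le> Kf"
          proof -
            have r: "(norm (x n \<omega>))\<^sup>2 / \<gamma> n \<le> Kf * Z n \<omega>" using Kf(2) n by blast
            thus ?thesis by (metis Zp pos_divide_le_eq)
          qed
          finally show ?thesis by simp
        qed
      qed
    qed
  qed
  have OW: "O_wp1 M W'" unfolding O_wp1_def using aeW by simp
  have OL: "O_Lp M 1 Z" unfolding O_Lp_def
  proof (intro conjI allI exI[of _ "1 + max C2 0 / (c/2) + max C2 0"])
    fix n show "Z n \<in> borel_measurable M" by measurable
  next
    fix n
    have "(\<integral>\<^sup>+ \<omega>. ennreal (norm (Z n \<omega>) powr 1) \<partial>M) = (\<integral>\<^sup>+ \<omega>. ennreal (Z n \<omega>) \<partial>M)"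
    proof (intro nn_integral_cong)
      fix \<omega> have "\<bar>Z n \<omega>\<bar> = Z n \<omega>" using Z1[of n \<omega>] by simp
      thus "ennreal (norm (Z n \<omega>) powr 1) = ennreal (Z n \<omega>)" by simp
    qed
    also have "\<dots> = ennreal (integral\<^sup>L M (Z n))"
      using Zint[of n] Z1 by (intro nn_integral_eq_integral) (auto intro: order_trans[OF zero_le_one])
    also have "\<dots> \<le> ennreal (1 + max C2 0 / (c/2) + max C2 0)"
      using Zint[of n] by (intro ennreal_leI) simp
    finally show "(\<integral>\<^sup>+ \<omega>. ennreal (norm (Z n \<omega>) powr 1) \<partial>M) \<le> ennreal (1 + max C2 0 / (c/2) + max C2 0)" .
  qed
  have EQ: "\<forall>n\<ge>1. \<forall>\<omega>\<in>space M.
           (norm (x n \<omega>))\<^sup>2 / \<gamma> n * indicator {\<omega>\<in>space M. (\<lambda>q. x q \<omega>) \<longlonglongrightarrow> 0} \<omega>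
           = W' n \<omega> * Z n \<omega>"
  proof (intro allI impI ballI)
    fix n :: nat and \<omega> assume "1 \<le> n" "\<omega> \<in> space M"
    show "(norm (x n \<omega>))\<^sup>2 / \<gamma> n * indicator {\<omega> \<in> space M. (\<lambda>q. x q \<omega>) \<longlonglongrightarrow> 0} \<omega> = W' n \<omega> * Z n \<omega>"
      using Z1[of n \<omega>] by (simp add: W'_def Cv_def)
  qed
  show ?thesis using OW OL EQ by blast
qed

end
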